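(* Let $\mathfrak{M}=(V,\langle\cdot,\cdot\rangle,A)$ be a model. (1) $\mathfrak{M}$ is Einstein if and only if $\mathfrak{M}$ is a simple Jacobi--Ricci commuting model with $\operatorname{Spec}(\rho)=\{a_1\}$ for some real $a_1$. (2) Let $\mathfrak{M}$ be a simple Jacobi--Ricci commuting model which is not Einstein, so that $\operatorname{Spec}(\rho)=\{a_1\pm a_2\sqrt{-1}\}$ with $a_1\in\mathbb{R}$, $a_2>0$. Set $J:=a_2^{-1}\{\rho-a_1\operatorname{id}\}$. Then $J$ is self-adjoint with respect to $\langle\cdot,\cdot\rangle$, $J^2=-\operatorname{id}$ (i.e. $J$ is a complex structure on $V$), $A(Jx,y,z,w)=A(x,Jy,z,w)=A(x,y,Jz,w)=A(x,y,z,Jw)$ for all $x,y,z,w\in V$, and $\rho=a_1\operatorname{id}+a_2J$.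
   Context: A model is a triple $\mathfrak{M}=(V,\langle\cdot,\cdot\rangle,A)$ where $V$ is a finite-dimensional real vector space, $\langle\cdot,\cdot\rangle$ is a non-degenerate symmetric bilinear form (inner product) of some signature $(p,q)$ on $V$, and $A\in\otimes^4V^*$ is an algebraic curvature tensor, i.e. $A(v_1,v_2,v_3,v_4)=-A(v_2,v_1,v_3,v_4)=A(v_3,v_4,v_1,v_2)$ and $A(v_1,v_2,v_3,v_4)+A(v_2,v_3,v_1,v_4)+A(v_3,v_1,v_2,v_4)=0$. The Jacobi operator $\mathcal{J}(x)$, curvature operator $\mathcal{R}(x,y)$ and Ricci operator $\rho$ are defined by $\langle\mathcal{J}(x)y,z\rangle=A(y,x,x,z)$, $\langle\mathcal{R}(x,y)z,w\rangle=A(x,y,z,w)$, and $\langle\rho x,y\rangle=\operatorname{Tr}\{z\mapsto\frac12\mathcal{R}(z,x)y+\frac12\mathcal{R}(z,y)x\}$. $\mathfrak{M}$ is Einstein if $\rho=a\operatorname{id}$ for some $a\in\mathbb{R}$. $\mathfrak{M}$ is Jacobi--Ricci commuting if $\mathcal{J}(v)\rho=\rho\mathcal{J}(v)$ for all $v\in V$; it is known that this is equivalent to $A(\rho v_1,v_2,v_3,v_4)=A(v_1,\rho v_2,v_3,v_4)=A(v_1,v_2,\rho v_3,v_4)=A(v_1,v_2,v_3,\rho v_4)$ for all $v_i\in V$. $\mathfrak{M}$ is a simple Jacobi--Ricci commuting model if it is Jacobi--Ricci commuting, $\rho$ is complex diagonalizable, and either $\operatorname{Spec}(\rho)=\{a_1\}$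 or $\operatorname{Spec}(\rho)=\{a_1\pm a_2\sqrt{-1}\}$ with $a_2>0$ (spectrum taken in $\mathbb{C}$). *)

theory Defs
  imports "HOL-Analysis.Analysis"
begin

text \<open>The vector space V is modelled as real^'n ('n a finite index type).
  The inner product is a (possibly indefinite) non-degenerate symmetric bilinear form B,
  and the algebraic curvature tensor is a 4-linear form A.\<close>

definition lin4 :: "('v::real_vector \<Rightarrow> 'v \<Rightarrow> 'v \<Rightarrow> 'v \<Rightarrow> real) \<Rightarrow> bool" where
  "lin4 A \<longleftrightarrow>
     (\<forall>y z w. linear (\<lambda>x. A x y z w)) \<and> (\<forall>x z w. linear (\<lambda>y. A x y z w)) \<and>
     (\<forall>x y w. linear (\<lambda>z. A x y z w)) \<and> (\<forall>x y z. linear (\<lambda>w. A x y z w))"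

definition inner_form :: "('v::real_vector \<Rightarrow> 'v \<Rightarrow> real) \<Rightarrow> bool" where
  "inner_form B \<longleftrightarrow> (\<forall>y. linear (\<lambda>x. B x y)) \<and> (\<forall>x. linear (\<lambda>y. B x y)) \<and>
     (\<forall>x y. B x y = B y x) \<and> (\<forall>x. (\<forall>y. B x y = 0) \<longrightarrow> x = 0)"

definition alg_curv_tensor :: "('v::real_vector \<Rightarrow> 'v \<Rightarrow> 'v \<Rightarrow> 'v \<Rightarrow> real) \<Rightarrow> bool" where
  "alg_curv_tensor A \<longleftrightarrow> lin4 A \<and>
     (\<forall>v1 v2 v3 v4. A v1 v2 v3 v4 = - A v2 v1 v3 v4) \<and>
     (\<forall>v1 v2 v3 v4. A v1 v2 v3 v4 = A v3 v4 v1 v2) \<and>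
     (\<forall>v1 v2 v3 v4. A v1 v2 v3 v4 + A v2 v3 v1 v4 + A v3 v1 v2 v4 = 0)"

definition model :: "('v::real_vector \<Rightarrow> 'v \<Rightarrow> real) \<Rightarrow> ('v \<Rightarrow> 'v \<Rightarrow> 'v \<Rightarrow> 'v \<Rightarrow> real) \<Rightarrow> bool" where
  "model B A \<longleftrightarrow> inner_form B \<and> alg_curv_tensor A"

definition jacobi_op where
  "jacobi_op B A x y = (THE u. \<forall>z. B u z = A y x x z)"

definition curv_op where
  "curv_op B A x y z = (THE u. \<forall>w. B u w = A x y z w)"

definition lin_trace :: "(real^'n \<Rightarrow> real^'n) \<Rightarrow> real" where
  "lin_trace f = (\<Sum>i\<in>UNIV. f (axis i 1) $ i)"

definition ricci_op :: "(real^'n \<Rightarrow> real^'n \<Rightarrow> real) \<Rightarrow> (real^'n \<Rightarrow> real^'n \<Rightarrow> real^'n \<Rightarrow> real^'n \<Rightarrow> real)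
    \<Rightarrow> real^'n \<Rightarrow> real^'n" where
  "ricci_op B A x = (THE u. \<forall>y. B u y =
      lin_trace (\<lambda>z. (1/2) *\<^sub>R curv_op B A z x y + (1/2) *\<^sub>R curv_op B A z y x))"

definition einstein where
  "einstein B A \<longleftrightarrow> (\<exists>a::real. ricci_op B A = (\<lambda>x. a *\<^sub>R x))"

definition jacobi_ricci_commuting where
  "jacobi_ricci_commuting B A \<longleftrightarrow>
     (\<forall>v. jacobi_op B A v \<circ> ricci_op B A = ricci_op B A \<circ> jacobi_op B A v)"

definition cmatrix :: "(real^'n \<Rightarrow> real^'n) \<Rightarrow> complex^'n^'n" where
  "cmatrix f = (\<chi> i j. complex_of_real (matrix f $ i $ j))"

definition complex_diagonalizable :: "(real^'n \<Rightarrow> real^'n) \<Rightarrow> bool" where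
  "complex_diagonalizable f \<longleftrightarrow>
     (\<exists>(P::complex^'n^'n) (d::'n \<Rightarrow> complex). invertible P \<and>
        cmatrix f ** P = P ** (\<chi> i j. if i = j then d i else 0))"

definition cspec :: "(real^'n \<Rightarrow> real^'n) \<Rightarrow> complex set" where
  "cspec f = {c. \<exists>v::complex^'n. v \<noteq> 0 \<and> cmatrix f *v v = c *s v}"

definition simple_JRC where
  "simple_JRC B A \<longleftrightarrow> jacobi_ricci_commuting B A \<and> complex_diagonalizable (ricci_op B A) \<and>
     ((\<exists>a1::real. cspec (ricci_op B A) = {complex_of_real a1}) \<or>
      (\<exists>a1 a2::real. a2 > 0 \<and> cspec (ricci_op B A) = {Complex a1 a2, Complex a1 (- a2)}))"

end

theory Submission
  imports Defs
begin

lemma if_lin1: "inner_form B \<Longrightarrow> linear (\<lambda>x. B x y)" by (simp add: inner_form_def)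
lemma if_lin2: "inner_form B \<Longrightarrow> linear (\<lambda>y. B x y)" by (simp add: inner_form_def)
lemma if_sym: "inner_form B \<Longrightarrow> B x y = B y x" by (simp add: inner_form_def)
lemma if_nd: "inner_form B \<Longrightarrow> (\<And>y. B x y = 0) \<Longrightarrow> x = 0" by (simp add: inner_form_def)

lemma if_eq:
  assumes "inner_form B" "\<And>w. B u w = B v w" shows "u = v"
proof -
  have "\<And>w. B (u - v) w = 0"
    using assms linear_diff[OF if_lin1[OF assms(1)]] by simp
  then have "u - v = 0" using if_nd[OF assms(1)] by blast
  then show ?thesis by simp
qed

lemma riesz_ex:
  fixes B :: "real^'n \<Rightarrow> real^'n \<Rightarrow> real"
  assumes B: "inner_form B" and f: "linear f"
  shows "\<exists>u. \<forall>y. B u y = f y"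
proof -
  define T where "T u = (\<chi> i. B u (axis i 1))" for u
  have lT: "linear T"
    unfolding T_def linear_iff
    using linear_add[OF if_lin1[OF B]] linear_scale[OF if_lin1[OF B]]
    by (simp add: vec_eq_iff)
  have exp: "B u y = (\<Sum>i\<in>UNIV. y$i * B u (axis i 1))" for u y
  proof -
    have "B u y = B u (\<Sum>i\<in>UNIV. y$i *\<^sub>R axis i 1)"
      using basis_expansion[of y] by (simp add: scalar_mult_eq_scaleR)
    also have "\<dots> = (\<Sum>i\<in>UNIV. y$i * B u (axis i 1))"
      by (simp add: linear_sum[OF if_lin2[OF B]] linear_scale[OF if_lin2[OF B]])
    finally show ?thesis .
  qed
  have "inj T"
  proof (rule linear_injective_0[OF lT, THEN iffD2], intro allI impI)
    fix u assume "T u = 0"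
    then have "\<forall>i. B u (axis i 1) = 0" by (simp add: T_def vec_eq_iff)
    then have "\<And>y. B u y = 0" by (subst exp) simp
    then show "u = 0" using if_nd[OF B] by blast
  qed
  then have "surj T" using linear_inj_imp_surj[OF lT] by simp
  then obtain u where u: "T u = (\<chi> i. f (axis i 1))" by (metis surjE)
  have fexp: "f y = (\<Sum>i\<in>UNIV. y$i * f (axis i 1))" for y
  proof -
    have "f y = f (\<Sum>i\<in>UNIV. y$i *\<^sub>R axis i 1)"
      using basis_expansion[of y] by (simp add: scalar_mult_eq_scaleR)
    also have "\<dots> = (\<Sum>i\<in>UNIV. y$i * f (axis i 1))"
      by (simp add: linear_sum[OF f] linear_scale[OF f])
    finally show ?thesis .
  qed
  have bu: "B u (axis i 1) = f (axis i 1)" for i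
    using u by (simp add: T_def vec_eq_iff)
  have "B u y = f y" for y
  proof -
    have "B u y = (\<Sum>i\<in>UNIV. y$i * B u (axis i 1))" by (rule exp)
    also have "\<dots> = (\<Sum>i\<in>UNIV. y$i * f (axis i 1))" by (simp only: bu)
    also have "\<dots> = f y" by (rule fexp[symmetric])
    finally show ?thesis .
  qed
  then show ?thesis by blast
qed

lemma riesz_the:
  fixes B :: "real^'n \<Rightarrow> real^'n \<Rightarrow> real"
  assumes B: "inner_form B" and f: "linear f"
  shows "B (THE u. \<forall>y. B u y = f y) y = f y"
proof -
  obtain u where u: "\<forall>y. B u y = f y" using riesz_ex[OF B f] by blast
  have "(THE u. \<forall>y. B u y = f y) = u"
  proof (rule the_equality)
    show "\<forall>y. B u y = f y" by (rule u)
    fix v assume "\<forall>y. B v y = f y" then show "v = u" using u by (intro if_eq[OF B]) simp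
  qed
  then show ?thesis using u by simp
qed

lemma rep_linear:
  fixes B :: "real^'n \<Rightarrow> real^'n \<Rightarrow> real"
  assumes B: "inner_form B" and f1: "\<And>p. linear (F p)" and f2: "\<And>w. linear (\<lambda>p. F p w)"
  shows "linear (\<lambda>p. THE u. \<forall>w. B u w = F p w)"
proof -
  have r: "B (THE u. \<forall>w. B u w = F p w) w = F p w" for p w
    using riesz_the[OF B f1] by blast
  show ?thesis
  proof (rule linearI)
    fix p q
    show "(THE u. \<forall>w. B u w = F (p + q) w) = (THE u. \<forall>w. B u w = F p w) + (THE u. \<forall>w. B u w = F q w)"
      by (rule if_eq[OF B]) (simp only: r linear_add[OF if_lin1[OF B]], simp add: linear_add[OF f2])
  next
    fix c p
    show "(THE u. \<forall>w. B u w = F (c *\<^sub>R p) w) = c *\<^sub>R (THE u. \<forall>w. B u w = F p w)"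
      by (rule if_eq[OF B]) (simp only: r linear_scale[OF if_lin1[OF B]], simp add: linear_scale[OF f2])
  qed
qed



locale mdl =
  fixes B :: "real^'n \<Rightarrow> real^'n \<Rightarrow> real"
    and A :: "real^'n \<Rightarrow> real^'n \<Rightarrow> real^'n \<Rightarrow> real^'n \<Rightarrow> real"
  assumes M: "model B A"
begin

lemma IF: "inner_form B" using M by (simp add: model_def)
lemma AC: "alg_curv_tensor A" using M by (simp add: model_def)
lemma LA: "lin4 A" using AC unfolding alg_curv_tensor_def by blast
lemma L1: "linear (\<lambda>x. A x y z w)" using LA unfolding lin4_def by simp
lemma L2: "linear (\<lambda>y. A x y z w)" using LA unfolding lin4_def by simp
lemma L3: "linear (\<lambda>z. A x y z w)" using LA unfolding lin4_def by simp
lemma L4: "linear (\<lambda>w. A x y z w)" using LA unfolding lin4_def by simp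
lemma AS: "A v1 v2 v3 v4 = - A v2 v1 v3 v4" using AC unfolding alg_curv_tensor_def by blast
lemma PS: "A v1 v2 v3 v4 = A v3 v4 v1 v2" using AC unfolding alg_curv_tensor_def by blast
lemma BI: "A v1 v2 v3 v4 + A v2 v3 v1 v4 + A v3 v1 v2 v4 = 0" using AC unfolding alg_curv_tensor_def by blast
lemma AS2: "A v1 v2 v3 v4 = - A v1 v2 v4 v3"
  using PS[of v1 v2 v3 v4] AS[of v3 v4 v1 v2] PS[of v4 v3 v1 v2] by linarith

lemma curv: "B (curv_op B A x y z) w = A x y z w"
  unfolding curv_op_def by (rule riesz_the[OF IF L4])

lemma curv_lin1: "linear (\<lambda>x. curv_op B A x y z)"
  unfolding curv_op_def by (rule rep_linear[OF IF L4 L1])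
lemma curv_lin2: "linear (\<lambda>y. curv_op B A x y z)"
  unfolding curv_op_def by (rule rep_linear[OF IF L4 L2])
lemma curv_lin3: "linear (\<lambda>z. curv_op B A x y z)"
  unfolding curv_op_def by (rule rep_linear[OF IF L4 L3])

definition Ric where "Ric x y = lin_trace (\<lambda>z. (1/2) *\<^sub>R curv_op B A z x y + (1/2) *\<^sub>R curv_op B A z y x)"

lemma Ric_sym: "Ric x y = Ric y x"
  unfolding Ric_def by (simp add: add.commute)

lemma Ric_lin: "linear (Ric x)"
proof -
  have e: "Ric x y = (\<Sum>i\<in>UNIV. (1/2) * curv_op B A (axis i 1) x y $ i + (1/2) * curv_op B A (axis i 1) y x $ i)" for y
    by (simp add: Ric_def lin_trace_def)
  show ?thesis
    by (rule linearI) (simp_all add: e linear_add[OF curv_lin2] linear_add[OF curv_lin3]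
        linear_scale[OF curv_lin2] linear_scale[OF curv_lin3] sum.distrib sum_distrib_left algebra_simps)
qed

lemma ric: "B (ricci_op B A x) y = Ric x y"
  unfolding ricci_op_def Ric_def[symmetric] by (rule riesz_the[OF IF Ric_lin])

lemma ric_sa: "B (ricci_op B A x) y = B x (ricci_op B A y)"
  using ric[of x y] ric[of y x] Ric_sym[of x y] if_sym[OF IF, of "ricci_op B A y" x] by simp

lemma ric_lin: "linear (ricci_op B A)"
proof (rule linearI)
  fix x y
  show "ricci_op B A (x + y) = ricci_op B A x + ricci_op B A y"
    by (rule if_eq[OF IF]) (simp add: ric_sa linear_add[OF if_lin1[OF IF]] linear_add[OF if_lin2[OF IF]])
next
  fix c x
  show "ricci_op B A (c *\<^sub>R x) = c *\<^sub>R ricci_op B A x"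
    by (rule if_eq[OF IF]) (simp add: ric_sa linear_scale[OF if_lin1[OF IF]] linear_scale[OF if_lin2[OF IF]])
qed

lemma jac: "B (jacobi_op B A v y) z = A y v v z"
  unfolding jacobi_op_def by (rule riesz_the[OF IF L4])

lemma jac_lin: "linear (jacobi_op B A v)"
  unfolding jacobi_op_def by (rule rep_linear[OF IF L4 L1])

lemma JRC_A:
  assumes "jacobi_ricci_commuting B A"
  shows "A (ricci_op B A y) v v z = A y v v (ricci_op B A z)"
proof -
  have "jacobi_op B A v (ricci_op B A y) = ricci_op B A (jacobi_op B A v y)"
    using assms unfolding jacobi_ricci_commuting_def by (metis comp_apply)
  then have "B (jacobi_op B A v (ricci_op B A y)) z = B (ricci_op B A (jacobi_op B A v y)) z" by simp
  then show ?thesis by (simp add: jac ric_sa)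
qed

end


lemma W_lemma:
  fixes W :: "'a \<Rightarrow> 'a \<Rightarrow> 'a \<Rightarrow> 'a \<Rightarrow> real"
  assumes wA: "\<And>x y z w. W x y z w = - W x y w z"
    and wB: "\<And>x y z w. W x y z w + W x z w y + W x w y z = 0"
    and wC: "\<And>x y z w. W x y z w + W x z y w = W w z y x + W w y z x"
  shows "\<forall>x y z w. W x y z w = - W y x z w \<and> W x y z w = W z w x y"
proof (intro allI conjI)
  fix x y z w
  show "W x y z w = - W y x z w" using wA[of x y z w] wB[of x y z w] wC[of x y z w] wC[of x y w z] wA[of x z y w] wA[of y x z w] wB[of y x z w] wC[of y x z w] wC[of y x w z] wA[of y z x w] wB[of z x y w] wC[of z x y w] wB[of z x w y] wB[of w x y z] wB[of w x z y] by linarith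
  show "W x y z w = W z w x y" using wA[of x y z w] wB[of x y z w] wC[of x y z w] wB[of x y w z] wC[of x y w z] wA[of x z y w] wC[of x z w y] wB[of y x z w] wC[of y x z w] wB[of y x w z] wC[of y x w z] wA[of z x y w] wB[of z x y w] wC[of z x y w] wB[of z x w y] wA[of z y x w] wB[of w x y z] wB[of w x z y] by linarith
qed



context mdl begin

lemma BI2: "A a b c d + A a c d b + A a d b c = 0"
  using PS[of a b c d] PS[of a c d b] PS[of a d b c] BI[of c d b a] AS2[of c d b a] AS2[of d b c a] AS2[of b c d a]
  by linarith

lemma REV: "A a b c d = A d c b a"
  using PS[of a b c d] AS[of c d a b] AS2[of d c a b] by linarith

lemma JRC_pol:
  assumes "jacobi_ricci_commuting B A"
  shows "A (ricci_op B A y) v u z + A (ricci_op B A y) u v z = A y v u (ricci_op B A z) + A y u v (ricci_op B A z)"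
proof -
  have "A (ricci_op B A y) (v+u) (v+u) z = A y (v+u) (v+u) (ricci_op B A z)"
    by (rule JRC_A[OF assms])
  then have "A (ricci_op B A y) v v z + A (ricci_op B A y) v u z + A (ricci_op B A y) u v z + A (ricci_op B A y) u u z
    = A y v v (ricci_op B A z) + A y v u (ricci_op B A z) + A y u v (ricci_op B A z) + A y u u (ricci_op B A z)"
    by (simp add: linear_add[OF L2] linear_add[OF L3])
  then show ?thesis using JRC_A[OF assms, of y v z] JRC_A[OF assms, of y u z] by linarith
qed

lemma JRC_full:
  assumes "jacobi_ricci_commuting B A"
  shows "A (ricci_op B A x) y z w = A x (ricci_op B A y) z w \<and>
         A x y (ricci_op B A z) w = A (ricci_op B A x) y z w \<and>
         A x y z (ricci_op B A w) = A (ricci_op B A x) y z w"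
proof -
  define P where "P = ricci_op B A"
  define W where "W x y z w = A (P x) y z w" for x y z w
  have wA: "\<And>x y z w. W x y z w = - W x y w z" unfolding W_def by (rule AS2)
  have wB: "\<And>x y z w. W x y z w + W x z w y + W x w y z = 0" unfolding W_def by (rule BI2)
  have wC: "\<And>x y z w. W x y z w + W x z y w = W w z y x + W w y z x"
    unfolding W_def using JRC_pol[OF assms] REV P_def by metis
  have WL: "\<And>x y z w. W x y z w = - W y x z w \<and> W x y z w = W z w x y"
    using W_lemma[of W, OF wA wB wC] by blast
  have r1: "A (P x) y z w = A x (P y) z w" for x y z w
    using WL[of x y z w] AS[of x "P y" z w] unfolding W_def by linarith
  have r2: "A x y (P z) w = A (P x) y z w" for x y z w
    using WL[of x y z w] PS[of x y "P z" w] unfolding W_def by linarith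
  have r3: "A x y z (P w) = A (P x) y z w"
    using r1[of z w x y] r2[of x y z w] PS[of x y z "P w"] PS[of z "P w" x y] PS[of "P z" w x y] by linarith
  show ?thesis using r1 r2 r3 unfolding P_def by blast
qed

end


definition cvec :: "real^'n \<Rightarrow> complex^'n" where "cvec x = (\<chi> i. complex_of_real (x$i))"

lemma cvec_inj: "cvec u = cvec v \<Longrightarrow> u = v"
  by (simp add: cvec_def vec_eq_iff)

lemma cvec_add: "cvec (u + v) = cvec u + cvec v" by (simp add: cvec_def vec_eq_iff)
lemma cvec_diff: "cvec (u - v) = cvec u - cvec v" by (simp add: cvec_def vec_eq_iff)
lemma cvec_scale: "cvec (c *\<^sub>R u) = complex_of_real c *s cvec u" by (simp add: cvec_def vec_eq_iff)
lemma cvec_0: "cvec 0 = 0" by (simp add: cvec_def vec_eq_iff)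

lemma mat_mult_vec: "mat (k::'a::comm_ring_1) *v v = k *s v"
  by (auto simp: vec_eq_iff matrix_vector_mult_def mat_def if_distrib [of "\<lambda>x. x * y" for y] cong: if_cong)

lemma cm_cvec:
  fixes f :: "real^'n \<Rightarrow> real^'n"
  assumes "linear f" shows "cmatrix f *v cvec x = cvec (f x)"
proof -
  have "(cmatrix f *v cvec x) $ i = complex_of_real ((matrix f *v x) $ i)" for i
    by (simp add: cmatrix_def cvec_def matrix_vector_mult_def)
  then show ?thesis using matrix_works[OF assms[unfolded linear_matrix_vector_mul_eq[symmetric]]] by (simp add: vec_eq_iff cvec_def)
qed

lemma col_eq: "(M ** P) $ i $ j = (M *v column j P) $ i"
  by (simp add: matrix_matrix_mult_def matrix_vector_mult_def column_def)

lemma inv_col_nz: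
  fixes P :: "complex^'n^'n"
  assumes "invertible P" shows "column j P \<noteq> 0"
proof
  assume c: "column j P = 0"
  obtain P' where P': "P' ** P = mat 1" using assms by (auto simp: invertible_def)
  have "P *v axis j 1 = column j P"
    by (simp add: vec_eq_iff matrix_vector_mult_def column_def axis_def if_distrib cong: if_cong)
  then have "P' *v (P *v axis j 1) = 0" using c by simp
  then have "axis j (1::complex) = 0" by (simp add: matrix_vector_mul_assoc P')
  then show False by (simp add: axis_eq_0_iff)
qed

lemma diag_cols:
  fixes f :: "real^'n \<Rightarrow> real^'n"
  assumes "complex_diagonalizable f"
  shows "\<exists>(P::complex^'n^'n) d. invertible P \<and> (\<forall>j. cmatrix f *v column j P = d j *s column j P)
    \<and> (\<forall>j. d j \<in> cspec f)"
proof -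
  obtain P :: "complex^'n^'n" and d where P: "invertible P"
    and e: "cmatrix f ** P = P ** (\<chi> i j. if i = j then d i else 0)"
    using assms unfolding complex_diagonalizable_def by blast
  have c: "cmatrix f *v column j P = d j *s column j P" for j
  proof -
    have "(cmatrix f *v column j P) $ i = d j * column j P $ i" for i
    proof -
      have "(cmatrix f *v column j P) $ i = (P ** (\<chi> i j. if i = j then d i else 0)) $ i $ j"
        using col_eq[of "cmatrix f" P i j] e by simp
      also have "\<dots> = P $ i $ j * d j"
        by (simp add: matrix_matrix_mult_def if_distrib cong: if_cong)
      finally show ?thesis by (simp add: column_def)
    qed
    then show ?thesis by (simp add: vec_eq_iff)
  qed
  have dj: "d j \<in> cspec f" for j
    unfolding cspec_def using c inv_col_nz[OF P] by blast
  show ?thesis using P c dj by blast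
qed

lemma kill:
  fixes P L :: "complex^'n^'n"
  assumes "invertible P" "\<And>j. L *v column j P = 0" shows "L = 0"
proof -
  obtain P' where P': "P ** P' = mat 1" using assms by (auto simp: invertible_def)
  have "L ** P = 0" using assms(2) by (simp add: vec_eq_iff col_eq)
  then have "(L ** P) ** P' = 0" by simp
  then show ?thesis by (simp add: matrix_mul_assoc[symmetric] P')
qed

lemma spec1:
  fixes f :: "real^'n \<Rightarrow> real^'n"
  assumes lf: "linear f" and cd: "complex_diagonalizable f" and sp: "cspec f = {complex_of_real a}"
  shows "f = (\<lambda>x. a *\<^sub>R x)"
proof -
  obtain P :: "complex^'n^'n" and d where P: "invertible P" and c: "\<And>j. cmatrix f *v column j P = d j *s column j P"
    and dj: "\<And>j. d j \<in> cspec f" using diag_cols[OF cd] by blast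
  have "cmatrix f - mat (complex_of_real a) = 0"
  proof (rule kill[OF P])
    fix j
    have "d j = complex_of_real a" using dj[of j] sp by simp
    then show "(cmatrix f - mat (complex_of_real a)) *v column j P = 0"
      by (simp only: matrix_vector_mult_diff_rdistrib c mat_mult_vec) simp
  qed
  then have N: "cmatrix f = mat (complex_of_real a)" by simp
  show ?thesis
  proof
    fix x
    have "cvec (f x) = cmatrix f *v cvec x" using cm_cvec[OF lf, of x] by simp
    also have "\<dots> = cvec (a *\<^sub>R x)" by (simp only: N mat_mult_vec cvec_scale)
    finally show "f x = a *\<^sub>R x" by (rule cvec_inj)
  qed
qed

lemma spec2:
  fixes f :: "real^'n \<Rightarrow> real^'n"
  assumes lf: "linear f" and cd: "complex_diagonalizable f"
    and sp: "cspec f = {Complex a1 a2, Complex a1 (- a2)}"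
  shows "f (f x) - (2*a1) *\<^sub>R f x + (a1^2 + a2^2) *\<^sub>R x = 0"
proof -
  obtain P :: "complex^'n^'n" and d where P: "invertible P" and c: "\<And>j. cmatrix f *v column j P = d j *s column j P"
    and dj: "\<And>j. d j \<in> cspec f" using diag_cols[OF cd] by blast
  define N where "N = cmatrix f"
  define L where "L = N ** N - mat (complex_of_real (2*a1)) ** N + mat (complex_of_real (a1^2+a2^2))"
  have Lv: "L *v v = N *v (N *v v) - complex_of_real (2*a1) *s (N *v v) + complex_of_real (a1^2+a2^2) *s v" for v
    by (simp add: L_def matrix_vector_mult_diff_rdistrib matrix_vector_mult_add_rdistrib
        matrix_vector_mul_assoc[symmetric] mat_mult_vec)
  have q: "(d j)^2 - complex_of_real (2*a1) * d j + complex_of_real (a1^2+a2^2) = 0" for j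
    using dj[of j] sp by (auto simp: complex_eq_iff power2_eq_square algebra_simps)
  have "L = 0"
  proof (rule kill[OF P])
    fix j
    have e: "L *v column j P = ((d j)^2 - complex_of_real (2*a1) * d j + complex_of_real (a1^2+a2^2)) *s column j P"
      by (simp add: Lv N_def c vector_scalar_commute vector_smult_assoc power2_eq_square algebra_simps)
    show "L *v column j P = 0" unfolding e q by simp
  qed
  then have "cvec (f (f x) - (2*a1) *\<^sub>R f x + (a1^2 + a2^2) *\<^sub>R x) = cvec 0"
    using Lv[of "cvec x"] by (simp add: N_def cm_cvec[OF lf] cvec_add cvec_diff cvec_scale cvec_0)
  then show ?thesis by (rule cvec_inj)
qed



lemma cmatrix_scal: "cmatrix (\<lambda>x::real^'n. a *\<^sub>R x) = mat (complex_of_real a)"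
  by (simp add: cmatrix_def matrix_def mat_def vec_eq_iff axis_def)

lemma cspec_scal: "cspec (\<lambda>x::real^'n. a *\<^sub>R x) = {complex_of_real a}"
proof -
  have "cspec (\<lambda>x::real^'n. a *\<^sub>R x) = {c. \<exists>v::complex^'n. v \<noteq> 0 \<and> complex_of_real a *s v = c *s v}"
    by (simp add: cspec_def cmatrix_scal mat_mult_vec)
  also have "\<dots> = {complex_of_real a}"
    using axis_eq_0_iff[of "undefined::'n" "1::complex"] by auto
  finally show ?thesis .
qed

lemma inv_mat1: "invertible (mat 1 :: complex^'n^'n)"
  unfolding invertible_def by (rule exI[of _ "mat 1"]) simp

lemma jj_abs:
  fixes x u w :: "'a::real_vector"
  assumes "a2 \<noteq> 0" "w = (2*a1) *\<^sub>R u - (a1^2 + a2^2) *\<^sub>R x"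
  shows "inverse a2 *\<^sub>R (inverse a2 *\<^sub>R (w - a1 *\<^sub>R u) - a1 *\<^sub>R (inverse a2 *\<^sub>R (u - a1 *\<^sub>R x))) = - x"
proof -
  have "inverse a2 *\<^sub>R (inverse a2 *\<^sub>R (w - a1 *\<^sub>R u) - a1 *\<^sub>R (inverse a2 *\<^sub>R (u - a1 *\<^sub>R x)))
     = (inverse a2 * inverse a2 * (2*a1) - inverse a2 * inverse a2 * a1 - inverse a2 * inverse a2 * a1) *\<^sub>R u
       + (inverse a2 * inverse a2 * a1 * a1 - inverse a2 * inverse a2 * (a1^2 + a2^2)) *\<^sub>R x"
    unfolding assms(2) apply (simp add: algebra_simps)
    by (simp only: scaleR_left_distrib[symmetric]) simp
  also have "\<dots> = - x" using assms(1) by (simp add: field_simps power2_eq_square)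
  finally show ?thesis .
qed

lemma diag_scal: "complex_diagonalizable (\<lambda>x::real^'n. a *\<^sub>R x)"
  unfolding complex_diagonalizable_def cmatrix_scal
  by (rule exI[of _ "mat 1"], rule exI[of _ "\<lambda>_. complex_of_real a"]) (simp add: mat_def[symmetric] inv_mat1)

theorem lemma4:
  fixes B :: "real^'n \<Rightarrow> real^'n \<Rightarrow> real"
    and A :: "real^'n \<Rightarrow> real^'n \<Rightarrow> real^'n \<Rightarrow> real^'n \<Rightarrow> real"
  assumes "model B A"
  shows "(einstein B A \<longleftrightarrow>
           (simple_JRC B A \<and> (\<exists>a1::real. cspec (ricci_op B A) = {complex_of_real a1})))
    \<and> (\<forall>a1 a2 :: real. simple_JRC B A \<longrightarrow> \<not> einstein B A \<longrightarrow> a2 > 0 \<longrightarrow>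
           cspec (ricci_op B A) = {Complex a1 a2, Complex a1 (- a2)} \<longrightarrow>
           (let J = (\<lambda>x. inverse a2 *\<^sub>R (ricci_op B A x - a1 *\<^sub>R x)) in
              (\<forall>x y. B (J x) y = B x (J y)) \<and>
              (\<forall>x. J (J x) = - x) \<and>
              (\<forall>x y z w. A (J x) y z w = A x (J y) z w \<and> A x (J y) z w = A x y (J z) w
                         \<and> A x y (J z) w = A x y z (J w)) \<and>
              ricci_op B A = (\<lambda>x. a1 *\<^sub>R x + a2 *\<^sub>R J x)))"
proof -
  interpret mdl B A using assms by (simp add: mdl_def)
  define P where "P = ricci_op B A"
  have Plin: "linear P" unfolding P_def by (rule ric_lin)
  have part1: "einstein B A \<longleftrightarrow> (simple_JRC B A \<and> (\<exists>a1::real. cspec P = {complex_of_real a1}))"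
  proof
    assume "einstein B A"
    then obtain a where a: "P = (\<lambda>x. a *\<^sub>R x)" unfolding einstein_def P_def by blast
    have jrc: "jacobi_ricci_commuting B A"
      unfolding jacobi_ricci_commuting_def P_def[symmetric] a
      by (simp add: fun_eq_iff linear_scale[OF jac_lin])
    show "simple_JRC B A \<and> (\<exists>a1::real. cspec P = {complex_of_real a1})"
      unfolding simple_JRC_def P_def[symmetric] a
      using jrc diag_scal cspec_scal by blast
  next
    assume h: "simple_JRC B A \<and> (\<exists>a1::real. cspec P = {complex_of_real a1})"
    then obtain a where sp: "cspec P = {complex_of_real a}" by blast
    have cd: "complex_diagonalizable P" using h unfolding simple_JRC_def P_def by blast
    show "einstein B A" unfolding einstein_def P_def[symmetric]
      using spec1[OF Plin cd sp] by blast
  qed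
  have part2: "let J = (\<lambda>x. inverse a2 *\<^sub>R (P x - a1 *\<^sub>R x)) in
              (\<forall>x y. B (J x) y = B x (J y)) \<and>
              (\<forall>x. J (J x) = - x) \<and>
              (\<forall>x y z w. A (J x) y z w = A x (J y) z w \<and> A x (J y) z w = A x y (J z) w
                         \<and> A x y (J z) w = A x y z (J w)) \<and>
              P = (\<lambda>x. a1 *\<^sub>R x + a2 *\<^sub>R J x)"
    if sj: "simple_JRC B A" and a2: "a2 > 0" and sp: "cspec P = {Complex a1 a2, Complex a1 (- a2)}"
    for a1 a2
  proof -
    have jrc: "jacobi_ricci_commuting B A" and cd: "complex_diagonalizable P"
      using sj unfolding simple_JRC_def P_def by blast+
    have rr: "P (P x) = (2*a1) *\<^sub>R P x - (a1^2 + a2^2) *\<^sub>R x" for x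
      using spec2[OF Plin cd sp, of x] by (simp add: algebra_simps)
    define J where "J x = inverse a2 *\<^sub>R (P x - a1 *\<^sub>R x)" for x
    have a2nz: "a2 \<noteq> 0" using a2 by simp
    have sa: "B (J x) y = B x (J y)" for x y
      unfolding J_def P_def
      by (simp add: linear_scale[OF if_lin1[OF IF]] linear_diff[OF if_lin1[OF IF]]
          linear_scale[OF if_lin2[OF IF]] linear_diff[OF if_lin2[OF IF]] ric_sa)
    have jj: "J (J x) = - x" for x
      unfolding J_def linear_scale[OF Plin] linear_diff[OF Plin]
      by (rule jj_abs[OF a2nz rr])
    have AJ1: "A (J x) y z w = inverse a2 * (A (P x) y z w - a1 * A x y z w)" for x y z w
      unfolding J_def by (simp add: linear_scale[OF L1] linear_diff[OF L1])
    have AJ2: "A x (J y) z w = inverse a2 * (A x (P y) z w - a1 * A x y z w)" for x y z w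
      unfolding J_def by (simp add: linear_scale[OF L2] linear_diff[OF L2])
    have AJ3: "A x y (J z) w = inverse a2 * (A x y (P z) w - a1 * A x y z w)" for x y z w
      unfolding J_def by (simp add: linear_scale[OF L3] linear_diff[OF L3])
    have AJ4: "A x y z (J w) = inverse a2 * (A x y z (P w) - a1 * A x y z w)" for x y z w
      unfolding J_def by (simp add: linear_scale[OF L4] linear_diff[OF L4])
    have Aid: "A (J x) y z w = A x (J y) z w \<and> A x (J y) z w = A x y (J z) w
                         \<and> A x y (J z) w = A x y z (J w)" for x y z w
      using JRC_full[OF jrc, of x y z w] unfolding AJ1 AJ2 AJ3 AJ4 P_def by simp
    have Pe: "P = (\<lambda>x. a1 *\<^sub>R x + a2 *\<^sub>R J x)"
      using a2nz by (simp add: fun_eq_iff J_def)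
    show ?thesis unfolding Let_def J_def[symmetric] using sa jj Aid Pe by blast
  qed
  show ?thesis unfolding P_def[symmetric] using part1 part2 by blast
qed


end
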